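(* For every connected graph $G$ of order $n$, with $m$ edges and maximum degree $\Delta$, we have ${\rm I}_e(G)\le \left\lfloor\frac{m}{2}\right\rfloor+n+\Delta-2$.
   Context: All graphs are finite and simple. A graph is locally irregular if no two adjacent vertices have the same degree. An edge-irregulator of a graph $G$ is a set $S\subseteq E(G)$ such that $G-S$ is locally irregular; ${\rm I}_e(G)$ is the minimum cardinality of an edge-irregulator of $G$. *)

theory Defs
  imports Main
begin

definition simple_graph :: "'a set \<Rightarrow> 'a set set \<Rightarrow> bool" where
  "simple_graph V E \<longleftrightarrow> finite V \<and> (\<forall>e\<in>E. e \<subseteq> V \<and> card e = 2)"

definition degree :: "'a set set \<Rightarrow> 'a \<Rightarrow> nat" where
  "degree E v = card {e\<in>E. v \<in> e}"

definition max_degree :: "'a set \<Rightarrow> 'a set set \<Rightarrow> nat" where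
  "max_degree V E = Max (insert 0 (degree E ` V))"

definition adj :: "'a set set \<Rightarrow> 'a \<Rightarrow> 'a \<Rightarrow> bool" where
  "adj E u v \<longleftrightarrow> {u, v} \<in> E"

definition connected_graph :: "'a set \<Rightarrow> 'a set set \<Rightarrow> bool" where
  "connected_graph V E \<longleftrightarrow> V \<noteq> {} \<and> (\<forall>u\<in>V. \<forall>v\<in>V. (adj E)\<^sup>*\<^sup>* u v)"

definition locally_irregular :: "'a set set \<Rightarrow> bool" where
  "locally_irregular E \<longleftrightarrow> (\<forall>u v. {u, v} \<in> E \<longrightarrow> degree E u \<noteq> degree E v)"

definition edge_irregulator :: "'a set set \<Rightarrow> 'a set set \<Rightarrow> bool" where
  "edge_irregulator E S \<longleftrightarrow> S \<subseteq> E \<and> locally_irregular (E - S)"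

definition irr_e :: "'a set set \<Rightarrow> nat" where
  "irr_e E = (LEAST k. \<exists>S. edge_irregulator E S \<and> card S = k)"

end

theory Submission imports Defs begin

definition gwf :: "'a set \<Rightarrow> 'a set set \<Rightarrow> bool" where
  "gwf W F \<longleftrightarrow> finite W \<and> (\<forall>e\<in>F. e \<subseteq> W \<and> card e = 2)"

definition conn :: "'a set \<Rightarrow> 'a set set \<Rightarrow> bool" where
  "conn W F \<longleftrightarrow> (\<forall>x\<in>W. \<forall>y\<in>W. (adj F)\<^sup>*\<^sup>* x y)"

lemma gwf_finite: "gwf W F \<Longrightarrow> finite F"
  unfolding gwf_def by (meson PowI finite_Pow_iff rev_finite_subset subsetI)

lemma adj_sym: "adj F x y \<Longrightarrow> adj F y x"
  unfolding adj_def by (simp add: insert_commute)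

lemma rt_sym: "(adj F)\<^sup>*\<^sup>* x y \<Longrightarrow> (adj F)\<^sup>*\<^sup>* y x"
proof (induction rule: rtranclp_induct)
  case base then show ?case by simp
next
  case (step y z) then show ?case
    by (meson adj_sym converse_rtranclp_into_rtranclp)
qed

lemma card2_E: "card e = 2 \<Longrightarrow> (\<And>a b. e = {a,b} \<Longrightarrow> a \<noteq> b \<Longrightarrow> P) \<Longrightarrow> P"
  by (metis card_2_iff)

lemma edge_at: assumes "gwf W F" "conn W F" "x \<in> W" "y \<in> W" "x \<noteq> y"
  shows "\<exists>u. {x,u} \<in> F \<and> u \<noteq> x \<and> u \<in> W"
proof -
  have "(adj F)\<^sup>*\<^sup>* x y" using assms unfolding conn_def by auto
  then obtain u where "adj F x u" using assms(5)
    by (metis converse_rtranclpE)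
  then have e: "{x,u} \<in> F" unfolding adj_def .
  then have "card {x,u} = 2" "{x,u} \<subseteq> W" using assms(1) unfolding gwf_def by auto
  moreover have "u \<noteq> x" using \<open>card {x,u} = 2\<close> by (cases "u = x") auto
  ultimately show ?thesis using e by auto
qed

lemma deg_sum: assumes "gwf W F" shows "(\<Sum>x\<in>W. degree F x) = 2 * card F"
proof -
  have fF: "finite F" using gwf_finite assms .
  have fW: "finite W" using assms unfolding gwf_def by auto
  have "(\<Sum>x\<in>W. degree F x) = (\<Sum>x\<in>W. \<Sum>e\<in>F. if x \<in> e then 1 else 0)"
    unfolding degree_def using fF by (auto simp add: sum.If_cases intro!: sum.cong arg_cong[where f=card])
  also have "\<dots> = (\<Sum>e\<in>F. \<Sum>x\<in>W. if x \<in> e then 1 else 0)" by (rule sum.swap)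
  also have "\<dots> = (\<Sum>e\<in>F. 2)"
  proof (rule sum.cong)
    fix e assume "e \<in> F"
    then have "e \<subseteq> W" "card e = 2" using assms unfolding gwf_def by auto
    then have "W \<inter> e = e" by auto
    then show "(\<Sum>x\<in>W. if x \<in> e then 1 else 0) = (2::nat)" using fW \<open>card e = 2\<close>
      by (simp add: sum.If_cases)
  qed simp
  finally show ?thesis by simp
qed


lemma noncut:
  assumes g: "gwf W F" and c: "conn W F" and two: "card W \<ge> 2"
  shows "\<exists>v\<in>W. conn (W - {v}) {e\<in>F. v \<notin> e}"
proof -
  have fW: "finite W" using g unfolding gwf_def by auto
  have "W \<noteq> {}" using two by auto
  then obtain r where r: "r \<in> W" by auto
  define d where "d x = (LEAST k. (adj F ^^ k) r x)" for x
  have dex: "(adj F ^^ d x) r x" if "x \<in> W" for x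
  proof -
    have "\<exists>k. (adj F ^^ k) r x" using c r that unfolding conn_def by (simp add: rtranclp_power)
    then show ?thesis unfolding d_def by (rule LeastI_ex)
  qed
  have dle: "d x \<le> k" if "(adj F ^^ k) r x" for x k
    unfolding d_def using that by (rule Least_le)
  define M where "M = Max (d ` W)"
  have "M \<in> d ` W" unfolding M_def using fW \<open>W \<noteq> {}\<close> by auto
  then obtain v where v: "v \<in> W" "d v = M" by auto
  have vmax: "d x \<le> d v" if "x \<in> W" for x
    using v(2) fW that unfolding M_def by (metis Max_ge finite_imageI imageI)
  have "card (W - {r}) \<ge> 1" using two r fW by (simp add: card_Diff_singleton)
  then have "W - {r} \<noteq> {}" by (metis card.empty not_one_le_zero)
  then obtain x0 where x0: "x0 \<in> W" "x0 \<noteq> r" by auto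
  have "d x0 \<noteq> 0" using dex[OF x0(1)] x0(2) by (metis relpowp_0_E)
  then have "d v \<noteq> 0" using vmax[OF x0(1)] by linarith
  moreover have "d r = 0" using dle[of 0 r] by simp
  ultimately have rv: "r \<noteq> v" by auto
  define F' where "F' = {e\<in>F. v \<notin> e}"
  have key: "\<forall>x. (adj F ^^ k) r x \<longrightarrow> k \<le> d v \<longrightarrow> x \<noteq> v \<longrightarrow> (adj F')\<^sup>*\<^sup>* r x" for k
  proof (induction k)
    case 0 then show ?case by simp
  next
    case (Suc k)
    show ?case
    proof (intro allI impI)
      fix x assume a: "(adj F ^^ Suc k) r x" "Suc k \<le> d v" "x \<noteq> v"
      then obtain y where y: "(adj F ^^ k) r y" "adj F y x" by (meson relpowp_Suc_E)
      have "d y \<le> k" using dle[OF y(1)] .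
      then have "y \<noteq> v" using a(2) by auto
      then have "(adj F')\<^sup>*\<^sup>* r y" using Suc.IH y(1) a(2) by auto
      moreover have "adj F' y x" using y(2) a(3) \<open>y \<noteq> v\<close> unfolding adj_def F'_def by auto
      ultimately show "(adj F')\<^sup>*\<^sup>* r x" by (rule rtranclp.rtrancl_into_rtrancl)
    qed
  qed
  have reach: "(adj F')\<^sup>*\<^sup>* r x" if "x \<in> W - {v}" for x
    using key[of "d x"] dex[of x] vmax[of x] that by auto
  have "conn (W - {v}) F'"
    unfolding conn_def
  proof (intro ballI)
    fix x y assume "x \<in> W - {v}" "y \<in> W - {v}"
    then show "(adj F')\<^sup>*\<^sup>* x y" using reach rt_sym by (meson rtranclp_trans)
  qed
  then show ?thesis using v(1) unfolding F'_def by auto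
qed


lemma tjoin:
  "gwf W F \<Longrightarrow> conn W F \<Longrightarrow> W \<noteq> {} \<Longrightarrow> even (\<Sum>x\<in>W. t x) \<Longrightarrow>
   \<exists>J\<subseteq>F. card J \<le> card W - 1 \<and> (\<forall>x\<in>W. even (degree J x + t x))"
proof (induction "card W" arbitrary: W F t rule: less_induct)
  case less
  have fW: "finite W" using less.prems(1) unfolding gwf_def by auto
  show ?case
  proof (cases "card W \<ge> 2")
    case False
    have "card W > 0" using fW less.prems(3) by (simp add: card_gt_0_iff)
    then have "card W = 1" using False by linarith
    then obtain w where w: "W = {w}" by (meson card_1_singletonE)
    have "F = {}"
    proof (rule ccontr)
      assume "F \<noteq> {}"
      then obtain e where "e \<in> F" by auto
      then have "e \<subseteq> {w}" "card e = 2" using less.prems(1) w unfolding gwf_def by auto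
      then show False using card_mono[of "{w}" e] by simp
    qed
    then show ?thesis using less.prems(4) w by (intro exI[of _ "{}"]) (auto simp: degree_def)
  next
    case True
    obtain v where v: "v \<in> W" and cv: "conn (W - {v}) {e\<in>F. v \<notin> e}"
      using noncut[OF less.prems(1,2) True] by auto
    define W' where "W' = W - {v}"
    define F' where "F' = {e\<in>F. v \<notin> e}"
    have g': "gwf W' F'" using less.prems(1) unfolding gwf_def W'_def F'_def by auto
    have c': "conn W' F'" using cv unfolding W'_def F'_def .
    have lt: "card W' < card W" unfolding W'_def using v fW by (meson card_Diff1_less)
    have cW': "card W' = card W - 1" unfolding W'_def using v fW by simp
    have ne: "W' \<noteq> {}" proof assume "W' = {}" then have "card W' = 0" by simp
      then show False using cW' True by linarith qed
    obtain x1 where x1: "x1 \<in> W" "x1 \<noteq> v" using ne unfolding W'_def by auto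
    obtain u where u: "{v,u} \<in> F" "u \<noteq> v" "u \<in> W"
      using edge_at[OF less.prems(1,2) v x1(1)] x1(2) by auto
    have uW': "u \<in> W'" using u unfolding W'_def by auto
    have fF': "finite F'" using g' gwf_finite by auto
    have sumW: "(\<Sum>x\<in>W. t x) = t v + (\<Sum>x\<in>W'. t x)"
      unfolding W'_def using v fW by (simp add: sum.remove)
    have noV: "degree J v = 0" if "J \<subseteq> F'" for J
    proof -
      have e0: "{e\<in>J. v \<in> e} = {}" using that unfolding F'_def by auto
      show ?thesis unfolding degree_def e0 by simp
    qed
    have degsame: "degree (insert {v,u} J) x = degree J x" if "x \<noteq> v" "x \<noteq> u" for J x
      using that unfolding degree_def by (auto intro!: arg_cong[where f=card])
    show ?thesis
    proof (cases "even (t v)")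
      case True
      have "even (\<Sum>x\<in>W'. t x)" using less.prems(4) sumW True by simp
      then obtain J where J: "J \<subseteq> F'" "card J \<le> card W' - 1" "\<forall>x\<in>W'. even (degree J x + t x)"
        using less.hyps[OF lt g' c' ne] by blast
      have "J \<subseteq> F" using J(1) unfolding F'_def by auto
      moreover have "card J \<le> card W - 1" using J(2) lt by linarith
      moreover have "\<forall>x\<in>W. even (degree J x + t x)"
        using J(3) noV[OF J(1)] True unfolding W'_def by auto
      ultimately show ?thesis by blast
    next
      case False
      define t' where "t' x = t x + (if x = u then 1 else 0)" for x
      have "(\<Sum>x\<in>W'. t' x) = (\<Sum>x\<in>W'. t x) + 1"
        unfolding t'_def using uW' fW unfolding W'_def by (simp add: sum.distrib)
      then have "even (\<Sum>x\<in>W'. t' x)" using less.prems(4) sumW False by simp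
      then obtain J where J: "J \<subseteq> F'" "card J \<le> card W' - 1" "\<forall>x\<in>W'. even (degree J x + t' x)"
        using less.hyps[OF lt g' c' ne] by blast
      define J2 where "J2 = insert {v,u} J"
      have fJ: "finite J" using J(1) fF' by (rule finite_subset)
      have nin: "{v,u} \<notin> J" using J(1) unfolding F'_def by auto
      have "J2 \<subseteq> F" using J(1) u(1) unfolding F'_def J2_def by auto
      moreover have "card J2 = card J + 1" unfolding J2_def using fJ nin by simp
      then have "card J2 \<le> card W - 1" using J(2) cW' True by linarith
      moreover have "\<forall>x\<in>W. even (degree J2 x + t x)"
      proof
        fix x assume xW: "x \<in> W"
        show "even (degree J2 x + t x)"
        proof (cases "x = v")
          case True
          have "{e\<in>J2. v \<in> e} = {{v,u}}" using J(1) unfolding J2_def F'_def by auto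
          then have "degree J2 v = 1" unfolding degree_def by simp
          then show ?thesis using True False by simp
        next
          case xv: False
          show ?thesis
          proof (cases "x = u")
            case True
            have "{e\<in>J2. u \<in> e} = insert {v,u} {e\<in>J. u \<in> e}" unfolding J2_def by auto
            moreover have "finite {e\<in>J. u \<in> e}" using fJ by auto
            ultimately have "degree J2 u = degree J u + 1" unfolding degree_def using nin by simp
            moreover have "even (degree J u + t' u)" using J(3) uW' by auto
            ultimately show ?thesis using True unfolding t'_def by simp
          next
            case False
            have "x \<in> W'" using xW xv unfolding W'_def by auto
            then show ?thesis using J(3) degsame[OF xv False, of J] False unfolding t'_def J2_def by simp
          qed
        qed
      qed
      ultimately show ?thesis by blast
    qed
  qed
qed


definition cross :: "'a set \<Rightarrow> 'a set \<Rightarrow> bool" where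
  "cross A e \<longleftrightarrow> (\<exists>a\<in>e. a \<in> A) \<and> (\<exists>b\<in>e. b \<notin> A)"

lemma fixpar:
  assumes g: "gwf W F0" and c: "conn W F0" and ne: "W \<noteq> {}"
    and cr: "\<forall>e\<in>F0. cross A e"
    and q: "\<And>a b. a \<in> A \<Longrightarrow> b \<notin> A \<Longrightarrow> (even (q a) \<longleftrightarrow> odd (q b))"
    and sq: "even (\<Sum>x\<in>W. (q x :: nat))"
  shows "\<exists>H\<subseteq>F0. card (F0 - H) \<le> card W - 1 \<and> locally_irregular H"
proof -
  define t where "t x = degree F0 x + q x" for x
  have fW: "finite W" using g unfolding gwf_def by auto
  have fF: "finite F0" using g gwf_finite by auto
  have "(\<Sum>x\<in>W. t x) = 2 * card F0 + (\<Sum>x\<in>W. q x)"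
    unfolding t_def using deg_sum[OF g] by (simp add: sum.distrib)
  then have "even (\<Sum>x\<in>W. t x)" using sq by simp
  then obtain J where J: "J \<subseteq> F0" "card J \<le> card W - 1" "\<forall>x\<in>W. even (degree J x + t x)"
    using tjoin[OF g c ne] by blast
  define H where "H = F0 - J"
  have "F0 - H = J" unfolding H_def using J(1) by auto
  have split: "degree F0 x = degree H x + degree J x" for x
  proof -
    have "{e\<in>F0. x \<in> e} = {e\<in>H. x \<in> e} \<union> {e\<in>J. x \<in> e}" unfolding H_def using J(1) by auto
    moreover have "finite {e\<in>H. x \<in> e}" "finite {e\<in>J. x \<in> e}" using fF J(1) unfolding H_def
      by (auto intro: finite_subset)
    moreover have "{e\<in>H. x \<in> e} \<inter> {e\<in>J. x \<in> e} = {}" unfolding H_def by auto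
    ultimately show ?thesis unfolding degree_def by (simp add: card_Un_disjoint)
  qed
  have par: "even (degree H x + q x)" if "x \<in> W" for x
  proof -
    have "even (degree J x + t x)" using J(3) that by auto
    then have "even (degree H x + q x + 2 * degree J x)" unfolding t_def split by (simp add: algebra_simps)
    then show ?thesis by simp
  qed
  have "locally_irregular H"
    unfolding locally_irregular_def
  proof (intro allI impI)
    fix u w assume e: "{u, w} \<in> H"
    then have e0: "{u,w} \<in> F0" unfolding H_def by auto
    then have "{u,w} \<subseteq> W" "cross A {u,w}" using g cr unfolding gwf_def by auto
    then have uw: "u \<in> W" "w \<in> W" "(u \<in> A \<and> w \<notin> A) \<or> (w \<in> A \<and> u \<notin> A)"
      unfolding cross_def by auto
    show "degree H u \<noteq> degree H w"
    proof
      assume eq: "degree H u = degree H w"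
      show False using uw(3)
      proof
        assume "u \<in> A \<and> w \<notin> A"
        then show False using q[of u w] par[OF uw(1)] par[OF uw(2)] eq by auto
      next
        assume "w \<in> A \<and> u \<notin> A"
        then show False using q[of w u] par[OF uw(1)] par[OF uw(2)] eq by auto
      qed
    qed
  qed
  moreover have "H \<subseteq> F0" unfolding H_def by auto
  ultimately show ?thesis using J(2) \<open>F0 - H = J\<close> by metis
qed


lemma cross_pair: "cross A {a,b} \<longleftrightarrow> ((a \<in> A) \<noteq> (b \<in> A))"
  unfolding cross_def by auto

lemma escape: "R\<^sup>*\<^sup>* x y \<Longrightarrow> P x \<Longrightarrow> \<not> P y \<Longrightarrow> \<exists>c d. P c \<and> \<not> P d \<and> R c d"
  by (induction rule: rtranclp_induct) auto

lemma maxcut: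
  assumes g: "gwf V E" and c: "conn V E"
  shows "\<exists>A\<subseteq>V. card E \<le> 2 * card {e\<in>E. cross A e} \<and> conn V {e\<in>E. cross A e}"
proof -
  have fV: "finite V" using g unfolding gwf_def by auto
  have fE: "finite E" using g gwf_finite by auto
  define cs where "cs A = card {e\<in>E. cross A e}" for A
  define M where "M = Max (cs ` Pow V)"
  have "M \<in> cs ` Pow V" unfolding M_def using fV by (intro Max_in) auto
  then obtain A where A: "A \<subseteq> V" "cs A = M" by auto
  have amax: "cs A' \<le> cs A" if "A' \<subseteq> V" for A'
  proof -
    have "cs A' \<le> Max (cs ` Pow V)" by (rule Max_ge) (use fV that in auto)
    then show ?thesis using A(2) unfolding M_def by simp
  qed
  define F where "F = {e\<in>E. cross A e}"
  have fF: "finite F" unfolding F_def using fE by auto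
  have epair: "\<exists>a b. e = {a,b} \<and> a \<noteq> b \<and> a \<in> V \<and> b \<in> V" if "e \<in> E" for e
  proof -
    have "card e = 2" "e \<subseteq> V" using g that unfolding gwf_def by auto
    from \<open>card e = 2\<close> obtain a b where "e = {a,b}" "a \<noteq> b" by (rule card2_E)
    then show ?thesis using \<open>e \<subseteq> V\<close> by auto
  qed
  have cF: "conn V F"
    unfolding conn_def
  proof (intro ballI)
    fix x y assume x: "x \<in> V" and y: "y \<in> V"
    define C where "C = {z. (adj F)\<^sup>*\<^sup>* x z}"
    show "(adj F)\<^sup>*\<^sup>* x y"
    proof (rule ccontr)
      assume ny: "\<not> (adj F)\<^sup>*\<^sup>* x y"
      have "(adj E)\<^sup>*\<^sup>* x y" using c x y unfolding conn_def by auto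
      then obtain p d where pd: "p \<in> C" "d \<notin> C" "adj E p d"
        using escape[of "adj E" x y "\<lambda>z. z \<in> C"] ny unfolding C_def by auto
      have pdE: "{p,d} \<in> E" using pd(3) unfolding adj_def .
      have "{p,d} \<notin> F"
      proof
        assume "{p,d} \<in> F"
        then have "adj F p d" unfolding adj_def .
        moreover have "(adj F)\<^sup>*\<^sup>* x p" using pd(1) unfolding C_def by simp
        ultimately have "(adj F)\<^sup>*\<^sup>* x d" by (rule rtranclp.rtrancl_into_rtrancl[rotated])
        then show False using pd(2) unfolding C_def by simp
      qed
      then have ncpd: "\<not> cross A {p,d}" using pdE unfolding F_def by auto
      define A' where "A' = (A - C) \<union> ((C \<inter> V) - A)"
      have A'V: "A' \<subseteq> V" unfolding A'_def using A(1) by auto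
      have closed: "(a \<in> C) = (b \<in> C)" if "{a,b} \<in> F" for a b
      proof -
        have "adj F a b" "adj F b a" using that unfolding adj_def by (auto simp: insert_commute)
        have "(adj F)\<^sup>*\<^sup>* x b" if "(adj F)\<^sup>*\<^sup>* x a"
          using that \<open>adj F a b\<close> by (rule rtranclp.rtrancl_into_rtrancl)
        moreover have "(adj F)\<^sup>*\<^sup>* x a" if "(adj F)\<^sup>*\<^sup>* x b"
          using that \<open>adj F b a\<close> by (rule rtranclp.rtrancl_into_rtrancl)
        ultimately show ?thesis unfolding C_def by auto
      qed
      have sub: "F \<subseteq> {e\<in>E. cross A' e}"
      proof
        fix e assume eF: "e \<in> F"
        then have eE: "e \<in> E" unfolding F_def by auto
        obtain a b where ab: "e = {a,b}" "a \<in> V" "b \<in> V" using epair[OF eE] by auto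
        have "cross A {a,b}" using eF ab unfolding F_def by auto
        moreover have "(a \<in> C) = (b \<in> C)" using closed eF ab by auto
        ultimately have "cross A' {a,b}" using ab unfolding cross_pair A'_def by auto
        then show "e \<in> {e\<in>E. cross A' e}" using eE ab by auto
      qed
      have pV: "p \<in> V" "d \<in> V" using g pdE unfolding gwf_def by auto
      have "cross A' {p,d}" using ncpd pd(1,2) pV unfolding cross_pair A'_def by auto
      then have "{p,d} \<in> {e\<in>E. cross A' e} - F" using pdE \<open>{p,d} \<notin> F\<close> by auto
      then have "F \<subset> {e\<in>E. cross A' e}" using sub by auto
      then have "card F < cs A'" unfolding cs_def using fE by (auto intro: psubset_card_mono)
      then show False using amax[OF A'V] unfolding cs_def F_def by simp
    qed
  qed
  have loc: "degree (E - F) x \<le> degree F x" if x: "x \<in> V" for x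
  proof -
    define A' where "A' = (if x \<in> A then A - {x} else insert x A)"
    have A'V: "A' \<subseteq> V" unfolding A'_def using A(1) x by auto
    define I where "I = {e\<in>E. x \<in> e}"
    have eq: "{e\<in>E. cross A' e} = (F - I) \<union> (I - F)"
    proof (rule set_eqI)
      fix e
      show "e \<in> {e\<in>E. cross A' e} \<longleftrightarrow> e \<in> (F - I) \<union> (I - F)"
      proof (cases "e \<in> E")
        case True
        obtain a b where ab: "e = {a,b}" "a \<noteq> b" using epair[OF True] by auto
        have "cross A' {a,b} \<longleftrightarrow> (if x \<in> {a,b} then \<not> cross A {a,b} else cross A {a,b})"
          unfolding cross_pair A'_def using ab(2) by auto
        then show ?thesis using True ab unfolding F_def I_def by auto
      next
        case False then show ?thesis unfolding F_def I_def by auto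
      qed
    qed
    have fI: "finite I" unfolding I_def using fE by auto
    have "cs A' = card (F - I) + card (I - F)"
      unfolding cs_def eq using fF fI by (intro card_Un_disjoint) auto
    moreover have "card F = card (F - I) + card (F \<inter> I)"
    proof -
      have "F = (F - I) \<union> (F \<inter> I)" by auto
      then have "card F = card ((F - I) \<union> (F \<inter> I))" by simp
      also have "\<dots> = card (F - I) + card (F \<inter> I)" using fF by (intro card_Un_disjoint) auto
      finally show ?thesis .
    qed
    moreover have "cs A' \<le> card F" using amax[OF A'V] unfolding cs_def F_def .
    ultimately have "card (I - F) \<le> card (F \<inter> I)" by linarith
    moreover have "{e\<in>E - F. x \<in> e} = I - F" "{e\<in>F. x \<in> e} = F \<inter> I"
      unfolding I_def F_def by auto
    ultimately show ?thesis unfolding degree_def by simp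
  qed
  have gEF: "gwf V (E - F)" "gwf V F" using g unfolding gwf_def F_def by auto
  have "(\<Sum>x\<in>V. degree (E - F) x) \<le> (\<Sum>x\<in>V. degree F x)" using loc by (rule sum_mono)
  then have "card (E - F) \<le> card F" using deg_sum[OF gEF(1)] deg_sum[OF gEF(2)] by simp
  moreover have "card E = card F + card (E - F)"
  proof -
    have "F \<subseteq> E" unfolding F_def by auto
    then show ?thesis using fE fF card_mono[of E F] by (simp add: card_Diff_subset)
  qed
  ultimately have "card E \<le> 2 * card F" by simp
  then show ?thesis using A(1) cF unfolding F_def by auto
qed


lemma fix2:
  assumes g: "gwf W F0" and c: "conn W F0" and ne: "W \<noteq> {}"
    and cr: "\<forall>e\<in>F0. cross A e"
    and ev: "even (card (W - A)) \<or> even (card (W \<inter> A))"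
  shows "\<exists>H\<subseteq>F0. card (F0 - H) \<le> card W - 1 \<and> locally_irregular H"
proof -
  have fW: "finite W" using g unfolding gwf_def by auto
  show ?thesis using ev
  proof
    assume e: "even (card (W - A))"
    have "(\<Sum>x\<in>W. (if x \<in> A then 0 else 1::nat)) = card (W - A)"
      using fW by (simp add: sum.If_cases Diff_eq)
    then show ?thesis using fixpar[OF g c ne cr, of "\<lambda>x. if x \<in> A then 0 else 1"] e by auto
  next
    assume e: "even (card (W \<inter> A))"
    have "(\<Sum>x\<in>W. (if x \<in> A then 1 else 0::nat)) = card (W \<inter> A)"
      using fW by (simp add: sum.If_cases)
    then show ?thesis using fixpar[OF g c ne cr, of "\<lambda>x. if x \<in> A then 1 else 0"] e by auto
  qed
qed

theorem theorem7:
  fixes V :: "'a set" and E :: "'a set set"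
  assumes "simple_graph V E"
    and "connected_graph V E"
    and "card V \<ge> 2"
  shows "int (irr_e E) \<le> int (card E div 2) + int (card V) + int (max_degree V E) - 2"
proof -
  have g: "gwf V E" using assms(1) unfolding simple_graph_def gwf_def .
  have c: "conn V E" using assms(2) unfolding connected_graph_def conn_def by auto
  have fV: "finite V" using g unfolding gwf_def by auto
  have fE: "finite E" using g gwf_finite by auto
  have two: "card V \<ge> 2" by fact
  define D where "D = max_degree V E"
  have dle: "degree E x \<le> D" if "x \<in> V" for x
    unfolding D_def max_degree_def by (rule Max_ge) (use fV that in auto)
  obtain A where A: "A \<subseteq> V" "card E \<le> 2 * card {e\<in>E. cross A e}" "conn V {e\<in>E. cross A e}"
    using maxcut[OF g c] by blast
  define F where "F = {e\<in>E. cross A e}"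
  have gF: "gwf V F" using g unfolding gwf_def F_def by auto
  have cF: "conn V F" using A(3) unfolding F_def .
  have crF: "\<forall>e\<in>F. cross A e" unfolding F_def by auto
  have fF: "finite F" using gF gwf_finite by auto
  have Vne: "V \<noteq> {}" using two by auto
  have "card (V - {SOME x. x \<in> V}) \<ge> 1" using two fV Vne by (simp add: card_Diff_singleton some_in_eq)
  then obtain x0 y0 where xy: "x0 \<in> V" "y0 \<in> V" "x0 \<noteq> y0"
    by (metis Diff_iff Vne card.empty ex_in_conv not_one_le_zero singletonI some_in_eq)
  have "\<exists>H\<subseteq>F. locally_irregular H \<and> card (F - H) + 2 \<le> card V + D"
  proof (cases "even (card (V - A)) \<or> even (card (V \<inter> A))")
    case True
    obtain H where H: "H \<subseteq> F" "card (F - H) \<le> card V - 1" "locally_irregular H"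
      using fix2[OF gF cF Vne crF True] by blast
    obtain u where u: "{x0,u} \<in> F" using edge_at[OF gF cF xy] by auto
    have "{x0,u} \<in> {e\<in>E. x0 \<in> e}" using u unfolding F_def by auto
    moreover have "finite {e\<in>E. x0 \<in> e}" using fE by auto
    ultimately have "degree E x0 \<ge> 1" unfolding degree_def
      by (metis One_nat_def Suc_leI card_gt_0_iff empty_iff)
    then have "D \<ge> 1" using dle[OF xy(1)] by linarith
    then show ?thesis using H two by (intro exI[of _ H]) auto
  next
    case False
    obtain v where v: "v \<in> V" and cv: "conn (V - {v}) {e\<in>F. v \<notin> e}"
      using noncut[OF gF cF two] by auto
    define W' where "W' = V - {v}"
    define F' where "F' = {e\<in>F. v \<notin> e}"
    have g': "gwf W' F'" using gF unfolding gwf_def W'_def F'_def by auto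
    have c': "conn W' F'" using cv unfolding W'_def F'_def .
    have cW': "card W' = card V - 1" unfolding W'_def using v fV by simp
    have ne: "W' \<noteq> {}" proof assume "W' = {}" then have "card W' = 0" by simp
      then show False using cW' two by linarith qed
    have cr': "\<forall>e\<in>F'. cross A e" using crF unfolding F'_def by auto
    have ev: "even (card (W' - A)) \<or> even (card (W' \<inter> A))"
    proof (cases "v \<in> A")
      case True
      have "W' \<inter> A = (V \<inter> A) - {v}" unfolding W'_def by auto
      then have "card (W' \<inter> A) = card (V \<inter> A) - 1" using True v fV by simp
      moreover have "card (V \<inter> A) \<ge> 1" using True v fV
        by (metis IntI One_nat_def Suc_leI card_gt_0_iff empty_iff finite_Int)
      ultimately show ?thesis using False by auto
    next
      case vA: False
      have "W' - A = (V - A) - {v}" unfolding W'_def by auto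
      then have "card (W' - A) = card (V - A) - 1" using vA v fV by simp
      moreover have "card (V - A) \<ge> 1" using vA v fV
        by (metis DiffI One_nat_def Suc_leI card_gt_0_iff empty_iff finite_Diff)
      ultimately show ?thesis using False by auto
    qed
    obtain H where H: "H \<subseteq> F'" "card (F' - H) \<le> card W' - 1" "locally_irregular H"
      using fix2[OF g' c' ne cr' ev] by blast
    have "F - F' \<subseteq> {e\<in>E. v \<in> e}" unfolding F'_def F_def by auto
    then have "card (F - F') \<le> degree E v" unfolding degree_def using fE by (auto intro: card_mono)
    then have cFF: "card (F - F') \<le> D" using dle[OF v] by linarith
    have e1: "F - H = (F - F') \<union> (F' - H)" using H(1) unfolding F'_def by auto
    have "card ((F - F') \<union> (F' - H)) = card (F - F') + card (F' - H)"
      using fF unfolding F'_def by (intro card_Un_disjoint) auto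
    then have "card (F - H) = card (F - F') + card (F' - H)" unfolding e1 .
    then have "card (F - H) + 2 \<le> card V + D" using cFF H(2) cW' two by linarith
    moreover have "H \<subseteq> F" using H(1) unfolding F'_def by auto
    ultimately show ?thesis using H(3) by blast
  qed
  then obtain H where H: "H \<subseteq> F" "locally_irregular H" "card (F - H) + 2 \<le> card V + D" by blast
  define S where "S = E - H"
  have HE: "H \<subseteq> E" using H(1) unfolding F_def by auto
  have "E - S = H" unfolding S_def using HE by auto
  then have ei: "edge_irregulator E S" unfolding edge_irregulator_def S_def using H(2) by auto
  have "irr_e E \<le> card S" unfolding irr_e_def by (rule Least_le) (use ei in auto)
  have "S = (E - F) \<union> (F - H)" unfolding S_def using H(1) F_def by auto
  moreover have "card ((E - F) \<union> (F - H)) = card (E - F) + card (F - H)"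
    using fE fF by (intro card_Un_disjoint) auto
  ultimately have cS: "card S = card (E - F) + card (F - H)" by simp
  have "F \<subseteq> E" unfolding F_def by auto
  then have "card E = card F + card (E - F)" using fE fF card_mono[of E F] by (simp add: card_Diff_subset)
  then have "card (E - F) \<le> card E div 2" using A(2) unfolding F_def by linarith
  then have "irr_e E + 2 \<le> card E div 2 + card V + D" using cS H(3) \<open>irr_e E \<le> card S\<close> by linarith
  then show ?thesis unfolding D_def by linarith
qed

end
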